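(* Let $\vec u, \vec v, \vec w \in \mathbb{F}^3$ be unit vectors such that $\vec u$ and $\vec v$ are not parallel (i.e. not scalar multiples of each other). Then there exist finitely many linear isometric automorphisms $h_0, \dots, h_{k-1} : \mathbb{F}^3 \to \mathbb{F}^3$, each of which fixes either $\vec u$ or $\vec v$, such that $(h_0 \circ \dots \circ h_{k-1})(\vec u) = \vec w$.
   Context: $\mathbb{F}$ is either $\mathbb{R}$ or $\mathbb{C}$, and $\mathbb{F}^3$ carries its standard inner product. *)

theory Defs
  imports "HOL-Analysis.Analysis"
begin

definition lin_iso_aut :: "('a::real_normed_field ^ 3 \<Rightarrow> 'a ^ 3) \<Rightarrow> bool" where
  "lin_iso_aut h \<longleftrightarrow>
     (\<forall>x y. h (x + y) = h x + h y) \<and> (\<forall>c x. h (c *s x) = c *s h x) \<and>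
     bij h \<and> (\<forall>x. norm (h x) = norm x)"

definition parallel3 :: "'a::real_normed_field ^ 3 \<Rightarrow> 'a ^ 3 \<Rightarrow> bool" where
  "parallel3 u v \<longleftrightarrow> (\<exists>c. u = c *s v) \<or> (\<exists>c. v = c *s u)"

definition lemma3p5_prop :: "'a::real_normed_field itself \<Rightarrow> bool" where
  "lemma3p5_prop TYPE('a) \<longleftrightarrow>
    (\<forall>u v w :: 'a ^ 3. norm u = 1 \<longrightarrow> norm v = 1 \<longrightarrow> norm w = 1 \<longrightarrow> \<not> parallel3 u v \<longrightarrow>
      (\<exists>hs. (\<forall>h\<in>set hs. lin_iso_aut h \<and> (h u = u \<or> h v = v)) \<and> foldr (\<circ>) hs id u = w))"

end

theory Submission
  imports Defs
begin


lemma iso_lin: assumes "lin_iso_aut (h :: 'a::real_normed_field^3 \<Rightarrow> _)"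
  shows "Vector_Spaces.linear (*s) (*s) h"
  using assms unfolding lin_iso_aut_def Vector_Spaces.linear_iff
  by (simp add: vec.vector_space_axioms)

lemma iso_intro:
  fixes h :: "'a::real_normed_field^3 \<Rightarrow> 'a^3"
  assumes "\<And>x y. h (x + y) = h x + h y" "\<And>c x. h (c *s x) = c *s h x"
    "\<And>x. norm (h x) = norm x"
  shows "lin_iso_aut h"
proof -
  have lin: "Vector_Spaces.linear (*s) (*s) h"
    unfolding Vector_Spaces.linear_iff using assms by (simp add: vec.vector_space_axioms)
  have h0: "h 0 = 0" using assms(1)[of 0 0] by simp
  have hm: "h (x - y) = h x - h y" for x y
    using assms(1)[of "x - y" y] by (simp add: algebra_simps)
  have "inj h"
  proof (rule injI)
    fix x y assume "h x = h y"
    then have "norm (h (x - y)) = 0" by (simp add: hm)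
    then show "x = y" using assms(3) by simp
  qed
  then have "surj h" using vec.linear_injective_imp_surjective[OF lin] by simp
  then show ?thesis using \<open>inj h\<close> assms unfolding lin_iso_aut_def bij_def by simp
qed

lemma iso_comp: "lin_iso_aut f \<Longrightarrow> lin_iso_aut g \<Longrightarrow> lin_iso_aut (f \<circ> g)"
  unfolding lin_iso_aut_def by (auto intro: bij_comp)

lemma iso_id: "lin_iso_aut id" unfolding lin_iso_aut_def by simp

lemma iso_inv: assumes "lin_iso_aut f" shows "lin_iso_aut (inv f)"
proof -
  have b: "bij f" and a: "\<And>x y. f (x+y) = f x + f y" and s: "\<And>c x. f (c *s x) = c *s f x"
    and n: "\<And>x. norm (f x) = norm x" using assms unfolding lin_iso_aut_def by auto
  have ff: "f (inv f y) = y" for y using b by (simp add: bij_is_surj surj_f_inv_f)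
  have fi: "inv f (f x) = x" for x using b by (simp add: bij_is_inj)
  show ?thesis unfolding lin_iso_aut_def
  proof (intro conjI allI)
    fix x y show "inv f (x + y) = inv f x + inv f y"
      by (metis a ff fi)
  next
    fix c x show "inv f (c *s x) = c *s inv f x" by (metis s ff fi)
  next
    show "bij (inv f)" using b by (simp add: bij_imp_bij_inv)
  next
    fix x show "norm (inv f x) = norm x" by (metis n ff)
  qed
qed


locale cnjf =
  fixes cnj :: "'a::real_normed_field \<Rightarrow> 'a"
  assumes cnj_add: "cnj (a + b) = cnj a + cnj b"
    and cnj_mult: "cnj (a * b) = cnj a * cnj b"
    and cnj_cnj: "cnj (cnj a) = a"
    and cnj_norm: "a * cnj a = of_real (norm a ^ 2)"
    and cnj_of_real: "cnj (of_real r) = of_real r"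
begin

lemma cnj_0[simp]: "cnj 0 = 0" using cnj_of_real[of 0] by simp
lemma cnj_1[simp]: "cnj 1 = 1" using cnj_of_real[of 1] by simp
lemma cnj_minus[simp]: "cnj (- a) = - cnj a"
  using cnj_add[of a "-a"] by (simp add: eq_neg_iff_add_eq_0 add.commute)
lemma cnj_diff[simp]: "cnj (a - b) = cnj a - cnj b"
  using cnj_add[of a "-b"] by simp
lemma cnj_eq0[simp]: "cnj a = 0 \<longleftrightarrow> a = 0" by (metis cnj_0 cnj_cnj)
lemma cnj_divide[simp]: "cnj (a / b) = cnj a / cnj b"
proof (cases "b = 0")
  case True then show ?thesis by simp
next
  case False
  have "cnj (a / b) * cnj b = cnj a" using cnj_mult[of "a/b" b] False by simp
  then show ?thesis using False by (simp add: eq_divide_eq)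
qed
lemma cnj_sum: "cnj (sum f A) = sum (\<lambda>i. cnj (f i)) A"
  by (induction A rule: infinite_finite_induct) (auto simp: cnj_add)
lemmas cnj_simps[simp] = cnj_add cnj_mult cnj_cnj cnj_of_real

definition herm :: "'a^3 \<Rightarrow> 'a^3 \<Rightarrow> 'a" where
  "herm x y = (\<Sum>i\<in>UNIV. cnj (x$i) * y$i)"

lemma herm_add_right[simp]: "herm x (y + z) = herm x y + herm x z"
  unfolding herm_def by (simp add: distrib_left sum.distrib)
lemma herm_add_left[simp]: "herm (x + y) z = herm x z + herm y z"
  unfolding herm_def by (simp add: distrib_right sum.distrib)
lemma herm_diff_right[simp]: "herm x (y - z) = herm x y - herm x z"
  unfolding herm_def by (simp add: right_diff_distrib sum_subtractf)
lemma herm_diff_left[simp]: "herm (x - y) z = herm x z - herm y z"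
  unfolding herm_def by (simp add: left_diff_distrib sum_subtractf)
lemma herm_scale_right[simp]: "herm x (c *s y) = c * herm x y"
  unfolding herm_def by (simp add: sum_distrib_left algebra_simps)
lemma herm_scale_left[simp]: "herm (c *s x) y = cnj c * herm x y"
  unfolding herm_def by (simp add: sum_distrib_left algebra_simps)
lemma herm_zero_left[simp]: "herm 0 y = 0" unfolding herm_def by simp
lemma herm_zero_right[simp]: "herm x 0 = 0" unfolding herm_def by simp
lemma herm_cnj: "cnj (herm x y) = herm y x"
  unfolding herm_def cnj_sum by (simp add: mult.commute)
lemma herm_self: "herm x x = of_real (norm x ^ 2)"
proof -
  have "herm x x = (\<Sum>i\<in>UNIV. of_real (norm (x$i) ^ 2))"
    unfolding herm_def by (rule sum.cong) (auto simp del: of_real_power simp: cnj_norm[symmetric] mult.commute)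
  also have "\<dots> = of_real (\<Sum>i\<in>UNIV. norm (x$i) ^ 2)" by simp
  also have "(\<Sum>i\<in>UNIV. norm (x$i) ^ 2) = norm x ^ 2"
    unfolding norm_vec_def L2_set_def by (simp add: sum_nonneg)
  finally show ?thesis .
qed

lemma herm_eq0: "herm x x = 0 \<longleftrightarrow> x = 0"
  by (simp add: herm_self)

lemma norm_eq_herm: "norm x = norm y \<longleftrightarrow> herm x x = herm y y"
  unfolding herm_self of_real_eq_iff by (simp add: power2_eq_iff_nonneg)

end


context cnjf begin

lemma cnj_herm_self[simp]: "cnj (herm x x) = herm x x"
  by (simp add: herm_self del: of_real_power)

lemma reflect_exists:
  assumes nab: "norm a = norm b" and cab: "herm c a = herm c b"
  shows "\<exists>h. lin_iso_aut h \<and> h c = c \<and> h a = b"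
proof (cases "a = b")
  case True then show ?thesis using iso_id by (intro exI[of _ id]) auto
next
  case False
  define n where "n = a - b"
  define d where "d = herm n a"
  have bb: "herm b b = herm a a" using nab norm_eq_herm by simp
  have cd: "cnj d = herm a a - herm a b" unfolding d_def n_def
    by (simp add: herm_cnj)
  have nn: "herm n n = d + cnj d" unfolding cd unfolding d_def n_def using bb by simp
  have "n \<noteq> 0" using False unfolding n_def by simp
  then have "d + cnj d \<noteq> 0" using nn herm_eq0[of n] by metis
  then have d0: "d \<noteq> 0" by auto
  then have cd0: "cnj d \<noteq> 0" by simp
  define h where "h x = x - (herm n x / d) *s n" for x
  have hadd: "h (x + y) = h x + h y" for x y
    unfolding h_def by (simp add: vec_eq_iff algebra_simps add_divide_distrib)
  have hsc: "h (k *s x) = k *s h x" for k x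
    unfolding h_def by (simp add: vec_eq_iff algebra_simps)
  have hn: "norm (h x) = norm x" for x
  proof -
    define p where "p = herm n x"
    have xn: "herm x n = cnj p" unfolding p_def by (simp add: herm_cnj)
    have key: "p/d * cnj p + cnj p / cnj d * p = cnj p/cnj d * (p/d) * (d + cnj d)"
      using d0 cd0 by (simp add: field_simps)
    have "herm (h x) (h x) = herm x x - (p/d) * herm x n - cnj (p/d) * herm n x
        + cnj (p/d) * (p/d) * herm n n"
      unfolding h_def p_def by (simp add: algebra_simps)
    also have "\<dots> = herm x x" unfolding xn nn p_def[symmetric] using key
      by (simp add: algebra_simps)
    finally show ?thesis using norm_eq_herm by simp
  qed
  have "lin_iso_aut h" by (rule iso_intro) (use hadd hsc hn in auto)
  moreover have "herm n c = 0" unfolding n_def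
    by (metis cab herm_cnj herm_diff_left right_minus_eq)
  then have "h c = c" unfolding h_def by simp
  moreover have "h a = b" unfolding h_def d_def[symmetric] using d0 n_def by simp
  ultimately show ?thesis by blast
qed

end


definition okm :: "'a::real_normed_field^3 \<Rightarrow> 'a^3 \<Rightarrow> ('a^3 \<Rightarrow> 'a^3) \<Rightarrow> bool" where
  "okm u v h \<longleftrightarrow> lin_iso_aut h \<and> (h u = u \<or> h v = v)"

definition Gs :: "'a::real_normed_field^3 \<Rightarrow> 'a^3 \<Rightarrow> ('a^3 \<Rightarrow> 'a^3) set" where
  "Gs u v = {foldr (\<circ>) hs id | hs. \<forall>h\<in>set hs. okm u v h}"

definition Ss :: "'a::real_normed_field^3 \<Rightarrow> 'a^3 \<Rightarrow> ('a^3) set" where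
  "Ss u v = {x. \<forall>k. lin_iso_aut k \<and> k x = x \<longrightarrow> k \<in> Gs u v}"

lemma foldr_comp: "foldr (\<circ>) hs g = foldr (\<circ>) hs id \<circ> g"
  by (induction hs) (auto simp: comp_assoc)

lemma Gs_id: "id \<in> Gs u v" unfolding Gs_def by (auto intro: exI[of _ "[]"])

lemma Gs_single: "okm u v h \<Longrightarrow> h \<in> Gs u v"
  unfolding Gs_def by (auto intro!: exI[of _ "[h]"])

lemma Gs_comp: "f \<in> Gs u v \<Longrightarrow> g \<in> Gs u v \<Longrightarrow> f \<circ> g \<in> Gs u v"
  unfolding Gs_def
proof clarsimp
  fix hs hs' assume "\<forall>h\<in>set hs. okm u v h" "\<forall>h\<in>set hs'. okm u v h"
  then show "\<exists>hsa. foldr (\<circ>) hs id \<circ> foldr (\<circ>) hs' id = foldr (\<circ>) hsa id \<and> (\<forall>h\<in>set hsa. okm u v h)"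
    by (intro exI[of _ "hs @ hs'"] conjI) (auto simp only: foldr_append foldr_comp[of hs "foldr (\<circ>) hs' id"] set_append Un_iff)
qed

lemma Gs_iso: "f \<in> Gs u v \<Longrightarrow> lin_iso_aut f"
proof -
  have "\<forall>h\<in>set hs. okm u v h \<Longrightarrow> lin_iso_aut (foldr (\<circ>) hs id)" for hs
    by (induction hs) (auto simp: iso_id okm_def intro: iso_comp)
  then show "f \<in> Gs u v \<Longrightarrow> lin_iso_aut f" unfolding Gs_def by auto
qed

lemma okm_inv: assumes "okm u v h" shows "okm u v (inv h)"
proof -
  have b: "bij h" using assms unfolding okm_def lin_iso_aut_def by auto
  have "h x = x \<Longrightarrow> inv h x = x" for x using b by (metis bij_inv_eq_iff)
  then show ?thesis using assms iso_inv unfolding okm_def by blast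
qed

lemma Gs_inv: "f \<in> Gs u v \<Longrightarrow> inv f \<in> Gs u v"
proof -
  have "\<forall>h\<in>set hs. okm u v h \<Longrightarrow> inv (foldr (\<circ>) hs id) \<in> Gs u v" for hs
  proof (induction hs)
    case Nil then show ?case using Gs_id by (simp add: id_def)
  next
    case (Cons h hs)
    have bh: "bij h" using Cons.prems unfolding okm_def lin_iso_aut_def by auto
    have "foldr (\<circ>) hs id \<in> Gs u v" using Cons.prems unfolding Gs_def by auto
    then have bf: "bij (foldr (\<circ>) hs id)" using Gs_iso unfolding lin_iso_aut_def by blast
    have "inv (foldr (\<circ>) (h # hs) id) = inv (foldr (\<circ>) hs id) \<circ> inv h"
      using o_inv_distrib[OF bh bf] by simp
    moreover have "inv h \<in> Gs u v" using Cons.prems by (simp add: okm_inv Gs_single)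
    moreover have "inv (foldr (\<circ>) hs id) \<in> Gs u v" by (rule Cons.IH) (use Cons.prems in simp)
    ultimately show ?case by (metis Gs_comp)
  qed
  then show "f \<in> Gs u v \<Longrightarrow> inv f \<in> Gs u v" unfolding Gs_def by auto
qed

lemma Ss_u: "u \<in> Ss u v" unfolding Ss_def by (blast intro: Gs_single[unfolded okm_def])
lemma Ss_v: "v \<in> Ss u v" unfolding Ss_def by (blast intro: Gs_single[unfolded okm_def])

lemma Ss_conj: assumes x: "x \<in> Ss u v" and g: "g \<in> Gs u v" shows "g x \<in> Ss u v"
  unfolding Ss_def
proof (clarify)
  fix k assume k: "lin_iso_aut k" "k (g x) = g x"
  have gi: "lin_iso_aut g" using g Gs_iso by blast
  then have bg: "bij g" unfolding lin_iso_aut_def by auto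
  have "lin_iso_aut (inv g \<circ> k \<circ> g)" using k gi iso_inv iso_comp by blast
  moreover have "(inv g \<circ> k \<circ> g) x = x" using k bg by (simp add: bij_is_inj)
  ultimately have "inv g \<circ> k \<circ> g \<in> Gs u v" using x unfolding Ss_def by blast
  then have "g \<circ> (inv g \<circ> k \<circ> g) \<circ> inv g \<in> Gs u v" using g Gs_inv Gs_comp by blast
  moreover have "g \<circ> (inv g \<circ> k \<circ> g) \<circ> inv g = k"
    using bg by (auto simp: fun_eq_iff bij_is_surj surj_f_inv_f)
  ultimately show "k \<in> Gs u v" by simp
qed

context cnjf begin

lemma move_G:
  assumes "c \<in> Ss u v" "norm a = norm b" "herm c a = herm c b"
  shows "\<exists>g\<in>Gs u v. g a = b"
  using reflect_exists[OF assms(2,3)] assms(1) unfolding Ss_def by blast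

lemma move_S:
  assumes "c \<in> Ss u v" "a \<in> Ss u v" "norm a = norm b" "herm c a = herm c b"
  shows "b \<in> Ss u v"
  using move_G[OF assms(1,3,4)] Ss_conj[OF assms(2)] by blast

end


context cnjf begin

lemma unit_herm: "norm x = 1 \<longleftrightarrow> herm x x = 1"
proof -
  have "herm x x = 1 \<longleftrightarrow> norm x ^ 2 = 1"
    unfolding herm_self by (metis of_real_1 of_real_eq_iff)
  also have "\<dots> \<longleftrightarrow> norm x = 1" using norm_ge_zero[of x] power2_eq_1_iff[of "norm x"] by linarith
  finally show ?thesis by simp
qed

lemma cnj_q: "cnj q * q = of_real (norm q ^ 2)"
  by (metis cnj_norm mult.commute)

lemma cs:
  assumes "norm a = 1" "norm b = 1"
  shows "norm (herm a b) ^ 2 \<le> 1"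
    and "norm (herm a b) ^ 2 = 1 \<Longrightarrow> b = herm a b *s a"
proof -
  define q where "q = herm a b"
  define r where "r = b - q *s a"
  have aa: "herm a a = 1" "herm b b = 1" using assms unit_herm by auto
  have ba: "herm b a = cnj q" unfolding q_def by (simp add: herm_cnj)
  have "herm r r = 1 - cnj q * q" unfolding r_def
    by (simp add: aa ba q_def[symmetric] algebra_simps)
  then have "of_real (norm r ^ 2) = (of_real (1 - norm q ^ 2) :: 'a)"
    by (simp add: herm_self cnj_q del: of_real_power)
  then have nr: "norm r ^ 2 = 1 - norm q ^ 2" using of_real_eq_iff by blast
  then show "norm (herm a b) ^ 2 \<le> 1" unfolding q_def[symmetric]
    by (metis diff_ge_0_iff_ge zero_le_power2)
  assume "norm (herm a b) ^ 2 = 1"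
  then have "r = 0" using nr q_def by simp
  then show "b = herm a b *s a" unfolding r_def q_def by simp
qed

definition cr :: "'a^3 \<Rightarrow> 'a^3 \<Rightarrow> 'a^3" where
  "cr a b = vector [cnj (a$2*b$3 - a$3*b$2), cnj (a$3*b$1 - a$1*b$3), cnj (a$1*b$2 - a$2*b$1)]"

lemma herm3: "herm x y = cnj (x$1) * y$1 + cnj (x$2) * y$2 + cnj (x$3) * y$3"
  unfolding herm_def by (simp add: sum_3)

lemma cr_orth1: "herm a (cr a b) = 0"
  unfolding herm3 cr_def by (simp add: algebra_simps)

lemma cr_orth2: "herm b (cr a b) = 0"
  unfolding herm3 cr_def by (simp add: algebra_simps)

lemma cr_lagrange: "herm (cr a b) (cr a b) = herm a a * herm b b - herm a b * herm b a"
  unfolding herm3 cr_def by (simp add: algebra_simps)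

lemma orth_exists:
  assumes "herm a b = 0" "norm a = 1" "b \<noteq> 0"
  shows "\<exists>g. norm g = 1 \<and> herm a g = 0 \<and> herm b g = 0"
proof -
  define w where "w = cr a b"
  have "herm w w = herm b b" unfolding w_def cr_lagrange using assms unit_herm by simp
  then have nw: "norm w = norm b" using norm_eq_herm by simp
  then have nw0: "norm w \<noteq> 0" using assms by simp
  define g where "g = (of_real (1 / norm w) :: 'a) *s w"
  have "herm g g = of_real (1 / norm w) * of_real (1 / norm w) * of_real (norm w ^ 2)"
    unfolding g_def herm_scale_left herm_scale_right herm_self[of w] cnj_of_real by simp
  also have "\<dots> = 1" using nw0 by (simp add: power2_eq_square)
  finally have "norm g = 1" using unit_herm by simp
  moreover have "herm a g = 0" "herm b g = 0" unfolding g_def w_def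
    by (simp_all add: cr_orth1 cr_orth2)
  ultimately show ?thesis by blast
qed

end


context cnjf begin

lemma cnj_numeral[simp]: "cnj (numeral n) = numeral n"
  using cnj_of_real[of "numeral n"] by simp

lemma doubling:
  assumes x: "x \<in> Ss u v" and y: "y \<in> Ss u v" and nx: "norm x = 1" and ny: "norm y = 1"
  shows "\<exists>z\<in>Ss u v. norm z = 1 \<and> norm (herm z x) ^ 2 = (2 * norm (herm y x) ^ 2 - 1) ^ 2"
proof -
  define q where "q = herm y x"
  define z where "z = (2 * q) *s y - x"
  have xx: "herm x x = 1" and yy: "herm y y = 1" using nx ny unit_herm by auto
  have xy: "herm x y = cnj q" unfolding q_def by (simp add: herm_cnj)
  have yz: "herm y z = herm y x" unfolding z_def by (simp add: yy q_def[symmetric])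
  have "herm z z = 4 * (cnj q * q) - 2 * (cnj q * q) - 2 * (cnj q * q) + 1"
    unfolding z_def by (simp add: xx yy xy q_def[symmetric] algebra_simps)
  then have "herm z z = 1" by simp
  then have nz: "norm z = 1" using unit_herm by simp
  have zs: "z \<in> Ss u v" by (rule move_S[OF y x]) (use nx nz yz in auto)
  have "herm z x = 2 * (cnj q * q) - 1" unfolding z_def
    by (simp add: xx q_def[symmetric] algebra_simps)
  also have "\<dots> = of_real (2 * norm q ^ 2 - 1)" by (simp add: cnj_q)
  finally have hz: "herm z x = of_real (2 * norm q ^ 2 - 1)" .
  have "norm (herm z x) = \<bar>2 * norm q ^ 2 - 1\<bar>" by (simp only: hz norm_of_real)
  then have "norm (herm z x) ^ 2 = (2 * norm q ^ 2 - 1) ^ 2" by simp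
  then show ?thesis using zs nz q_def by blast
qed

lemma base:
  assumes x: "x \<in> Ss u v" and y: "y \<in> Ss u v" and nx: "norm x = 1" and ny: "norm y = 1"
    and small: "norm (herm y x) ^ 2 \<le> 1/2"
  shows "\<exists>z\<in>Ss u v. norm z = 1 \<and> herm x z = 0"
proof -
  define q where "q = herm y x"
  define m where "m = norm q ^ 2"
  define e where "e = x - q *s y"
  have xx: "herm x x = 1" and yy: "herm y y = 1" using nx ny unit_herm by auto
  have xy: "herm x y = cnj q" unfolding q_def by (simp add: herm_cnj)
  have cq1: "cnj q * q = of_real m" and cq2: "q * cnj q = of_real m"
    unfolding m_def using cnj_q by (auto simp: mult.commute)
  have ye: "herm y e = 0" unfolding e_def by (simp add: yy q_def)
  then have ey: "herm e y = 0" by (metis herm_cnj cnj_0)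
  have xe: "herm x e = of_real (1 - m)" unfolding e_def
    by (simp add: xx xy cq2)
  have ee: "herm e e = of_real (1 - m)" unfolding e_def
    by (simp add: xx yy xy q_def[symmetric] cq1 cq2 algebra_simps)
  have m2: "m \<le> 1/2" using small m_def q_def by simp
  have m0: "0 \<le> m" unfolding m_def by simp
  have "e \<noteq> 0"
  proof
    assume "e = 0" then have "herm e e = 0" by simp
    then show False using ee m2 by simp
  qed
  then obtain g where ng: "norm g = 1" and yg: "herm y g = 0" and eg: "herm e g = 0"
    using orth_exists[of y e] ye ny by blast
  have gg: "herm g g = 1" using ng unit_herm by simp
  have gy: "herm g y = 0" using yg by (metis herm_cnj cnj_0)
  have ge: "herm g e = 0" using eg by (metis herm_cnj cnj_0)
  have xg: "herm x g = 0"
  proof -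
    have "x = e + q *s y" unfolding e_def by simp
    then show ?thesis using eg yg by (metis herm_add_left herm_scale_left mult_zero_right add_0)
  qed
  define t where "t = - m / (1 - m)"
  define s where "s = sqrt ((1 - m) * (1 - t^2))"
  have t1: "t^2 \<le> 1"
  proof -
    have "\<bar>t\<bar> \<le> 1" unfolding t_def using m2 m0 by (simp add: abs_div_pos)
    then show ?thesis by (simp add: abs_square_le_1)
  qed
  have s2: "s^2 = (1 - m) * (1 - t^2)" unfolding s_def using t1 m2 by simp
  define z where "z = q *s y + (of_real t :: 'a) *s e + (of_real s :: 'a) *s g"
  have yz: "herm y z = q" unfolding z_def by (simp add: yy ye yg)
  have "herm z z = of_real (m + t^2 * (1 - m) + s^2)" unfolding z_def
    by (simp add: yy ye yg ey ee eg gy ge gg cq1 cq2 algebra_simps power2_eq_square)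
  also have "m + t^2 * (1 - m) + s^2 = 1" unfolding s2 by (simp add: algebra_simps)
  finally have nz: "norm z = 1" using unit_herm by simp
  have "herm x z = of_real (m + t * (1 - m))" unfolding z_def
    by (simp add: xy xe xg cq2)
  also have "m + t * (1 - m) = 0" unfolding t_def using m2 by simp
  finally have xz: "herm x z = 0" by simp
  have "z \<in> Ss u v" by (rule move_S[OF y x]) (use nx nz yz q_def in auto)
  then show ?thesis using nz xz by blast
qed

end


context cnjf begin

lemma iter:
  assumes nu: "norm u = 1"
  shows "\<forall>y. y \<in> Ss u v \<longrightarrow> norm y = 1 \<longrightarrow> norm (herm y u) ^ 2 < 1 \<longrightarrow>
     2 ^ n * (1 - norm (herm y u) ^ 2) \<ge> 1/2 \<longrightarrow> (\<exists>z\<in>Ss u v. norm z = 1 \<and> herm u z = 0)"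
proof (induction n)
  case 0
  show ?case using base[OF Ss_u _ nu] by auto
next
  case (Suc n)
  show ?case
  proof (intro allI impI)
    fix y assume y: "y \<in> Ss u v" and ny: "norm y = 1" and m1: "norm (herm y u) ^ 2 < 1"
      and big: "2 ^ Suc n * (1 - norm (herm y u) ^ 2) \<ge> 1/2"
    define m where "m = norm (herm y u) ^ 2"
    show "\<exists>z\<in>Ss u v. norm z = 1 \<and> herm u z = 0"
    proof (cases "m \<le> 1/2")
      case True then show ?thesis using base[OF Ss_u y nu ny] m_def by auto
    next
      case False
      obtain z where z: "z \<in> Ss u v" "norm z = 1"
        and mz: "norm (herm z u) ^ 2 = (2 * m - 1) ^ 2"
        using doubling[OF Ss_u y nu ny] m_def by blast
      have lt: "(2 * m - 1) ^ 2 < 1" using False m1 m_def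
        by (simp add: power2_eq_square) (smt (verit) mult_less_cancel_right1)
      have ge: "1 - (2 * m - 1) ^ 2 \<ge> 2 * (1 - m)"
      proof -
        have "1 - (2 * m - 1) ^ 2 = 4 * m * (1 - m)" by (simp add: power2_eq_square algebra_simps)
        moreover have "4 * m * (1 - m) \<ge> 2 * (1 - m)" using False m1 m_def
          by (intro mult_right_mono) auto
        ultimately show ?thesis by simp
      qed
      have h1: "2 ^ n * (1 - (2 * m - 1) ^ 2) \<ge> 2 ^ n * (2 * (1 - m))" using ge by simp
      have h2: "(2::real) ^ n * (2 * (1 - m)) = 2 ^ Suc n * (1 - m)" by simp
      have h3: "2 ^ Suc n * (1 - m) \<ge> 1/2" using big unfolding m_def .
      have "2 ^ n * (1 - (2 * m - 1) ^ 2) \<ge> 1/2" using h1 h2 h3 by linarith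
      then show ?thesis using Suc.IH z mz lt by auto
    qed
  qed
qed

lemma final:
  assumes x: "x \<in> Ss u v" and nu: "norm u = 1" and nx: "norm x = 1" and ux: "herm u x = 0"
    and nw: "norm w = 1"
  shows "\<exists>g\<in>Gs u v. g u = w"
proof -
  define \<gamma> where "\<gamma> = herm u w"
  have g1: "norm \<gamma> ^ 2 \<le> 1" using cs(1)[OF nu nw] \<gamma>_def by simp
  obtain e where ne: "norm e = 1" and ue: "herm u e = 0" and xe: "herm x e = 0"
    using orth_exists[OF ux nu] nx by fastforce
  have xu: "herm x u = 0" using ux by (metis herm_cnj cnj_0)
  have eu: "herm e u = 0" using ue by (metis herm_cnj cnj_0)
  have uu: "herm u u = 1" and ee: "herm e e = 1" using nu ne unit_herm by auto
  define t where "t = sqrt (1 - norm \<gamma> ^ 2)"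
  have t2: "t ^ 2 = 1 - norm \<gamma> ^ 2" unfolding t_def using g1 by simp
  define z where "z = \<gamma> *s u + (of_real t :: 'a) *s e"
  have "herm z z = of_real (norm \<gamma> ^ 2 + t ^ 2)" unfolding z_def
    using cnj_norm[of \<gamma>]
    by (simp add: uu ee ue eu power2_eq_square algebra_simps)
  also have "norm \<gamma> ^ 2 + t ^ 2 = 1" using t2 by simp
  finally have nz: "norm z = 1" using unit_herm by simp
  have xz: "herm x u = herm x z" unfolding z_def by (simp add: xu xe)
  obtain g1 where G1: "g1 \<in> Gs u v" "g1 u = z" using move_G[OF x _ xz] nu nz by auto
  have uz: "herm u z = herm u w" unfolding z_def \<gamma>_def by (simp add: uu ue)
  obtain g2 where G2: "g2 \<in> Gs u v" "g2 z = w" using move_G[OF Ss_u _ uz] nz nw by auto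
  show ?thesis using G1 G2 Gs_comp by (intro bexI[of _ "g2 \<circ> g1"]) auto
qed

lemma main:
  fixes u v w :: "'a^3"
  assumes nu: "norm u = 1" and nv: "norm v = 1" and nw: "norm w = 1" and np: "\<not> parallel3 u v"
  shows "\<exists>hs. (\<forall>h\<in>set hs. lin_iso_aut h \<and> (h u = u \<or> h v = v)) \<and> foldr (\<circ>) hs id u = w"
proof -
  define m where "m = norm (herm v u) ^ 2"
  have "m \<le> 1" using cs(1)[OF nv nu] m_def by simp
  moreover have "m \<noteq> 1" using cs(2)[OF nv nu] np m_def unfolding parallel3_def by auto
  ultimately have m1: "m < 1" by simp
  obtain n where n: "1 / (2 * (1 - m)) < 2 ^ n" using real_arch_pow[of 2] by fastforce
  then have "2 ^ n * (1 - m) \<ge> 1/2" using m1 by (simp add: field_simps)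
  then obtain x where "x \<in> Ss u v" "norm x = 1" "herm u x = 0"
    using iter[OF nu, of v n, rule_format, OF Ss_v nv] m1 m_def by auto
  then obtain g where "g \<in> Gs u v" "g u = w" using final nu nw by blast
  then show ?thesis unfolding Gs_def okm_def by auto
qed

end

interpretation R: cnjf "\<lambda>x::real. x"
  by unfold_locales (auto simp: power2_eq_square)

interpretation C: cnjf cnj
  by unfold_locales (auto, metis complex_norm_square of_real_power)

theorem lemma3p5:
  shows "lemma3p5_prop TYPE(real) \<and> lemma3p5_prop TYPE(complex)"
  unfolding lemma3p5_prop_def using R.main C.main by blast


end
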